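(* For every integer $v \ge 4$, \[ \beta(1,v,4) = \begin{cases} D(v,4) & \text{if } 4 \le v \le 13,\\ 13 & \text{if } 14 \le v \le 39,\\ \left\lfloor \frac{v-1}{3} \right\rfloor & \text{if } v \ge 40. \end{cases} \]
   Context: For integers $v \ge k \ge 2$, a $(v,k)$-packing is a pair $(X,\mathcal{B})$ where $X$ is a set of $v$ points and $\mathcal{B}$ is a set of $k$-subsets of $X$ (blocks) such that every pair of distinct points lies in at most one block. $D(v,k)$ denotes the maximum number of blocks in a $(v,k)$-packing. A partial parallel class (PPC) is a set of pairwise disjoint blocks; its size is the number of blocks. A PPC of size $\rho$ is maximum if the packing has no PPC of size $\rho+1$. $\beta(\rho,v,k)$ denotes the maximum number of blocks in a $(v,k)$-packing in which the maximum PPC has size $\rho$; thus $\beta(1,v,4)$ is the maximum number of blocks in a $(v,4)$-packing in which no two blocks are disjoint. *)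

theory Defs
  imports Main
begin

definition is_packing :: "'a set \<Rightarrow> nat \<Rightarrow> nat \<Rightarrow> 'a set set \<Rightarrow> bool" where
  "is_packing X v k \<B> \<longleftrightarrow> finite X \<and> card X = v \<and>
     (\<forall>B\<in>\<B>. B \<subseteq> X \<and> card B = k) \<and>
     (\<forall>x\<in>X. \<forall>y\<in>X. x \<noteq> y \<longrightarrow> card {B\<in>\<B>. x \<in> B \<and> y \<in> B} \<le> 1)"

definition is_ppc :: "'a set set \<Rightarrow> 'a set set \<Rightarrow> bool" where
  "is_ppc \<B> P \<longleftrightarrow> P \<subseteq> \<B> \<and> (\<forall>B\<in>P. \<forall>C\<in>P. B \<noteq> C \<longrightarrow> B \<inter> C = {})"

definition max_ppc_size :: "'a set set \<Rightarrow> nat" where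
  "max_ppc_size \<B> = Max {card P | P. is_ppc \<B> P}"

text \<open>Packings are taken on the canonical point set {0..<v} (WLOG up to relabelling).\<close>
definition D :: "nat \<Rightarrow> nat \<Rightarrow> nat" where
  "D v k = Max {card \<B> | \<B>. is_packing {..<v} v k \<B>}"

definition beta :: "nat \<Rightarrow> nat \<Rightarrow> nat \<Rightarrow> nat" where
  "beta \<rho> v k = Max {card \<B> | \<B>. is_packing {..<v} v k \<B> \<and> max_ppc_size \<B> = \<rho>}"

end

theory Submission
  imports Defs
begin

lemma packing_finite: "is_packing X v k F \<Longrightarrow> finite F"
  unfolding is_packing_def by (meson Pow_iff finite_Pow_iff finite_subset subsetI)

lemma packing_linear:
  assumes pk: "is_packing X v k F" and BC: "B \<in> F" "C \<in> F" "B \<noteq> C"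
  shows "card (B \<inter> C) \<le> 1"
proof (rule ccontr)
  assume neg: "\<not> ?thesis"
  have finX: "finite X" and BX: "B \<subseteq> X" using pk BC unfolding is_packing_def by auto
  have "finite (B \<inter> C)" using finX BX by (meson finite_Int finite_subset)
  then have "\<not> (\<forall>a\<in>B \<inter> C. \<forall>b\<in>B \<inter> C. a = b)"
    using neg card_le_Suc0_iff_eq[of "B \<inter> C"] by simp
  then obtain x y where xy: "x \<in> B \<inter> C" "y \<in> B \<inter> C" "x \<noteq> y" by blast
  have "x \<in> X" "y \<in> X" using xy BX by auto
  then have le: "card {B'\<in>F. x \<in> B' \<and> y \<in> B'} \<le> 1" using pk xy(3) unfolding is_packing_def by blast
  have "{B, C} \<subseteq> {B'\<in>F. x \<in> B' \<and> y \<in> B'}" using xy BC by auto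
  moreover have "finite {B'\<in>F. x \<in> B' \<and> y \<in> B'}" using packing_finite[OF pk] by simp
  ultimately have "card {B, C} \<le> card {B'\<in>F. x \<in> B' \<and> y \<in> B'}" by (rule card_mono[rotated])
  then show False using le BC(3) by simp
qed

lemma packing_subset:
  assumes pk: "is_packing X v k F" and "G \<subseteq> F"
  shows "is_packing X v k G"
proof -
  have fin: "finite F" using packing_finite[OF pk] .
  have le: "card {B\<in>G. x \<in> B \<and> y \<in> B} \<le> card {B\<in>F. x \<in> B \<and> y \<in> B}" for x y
    using assms(2) fin by (intro card_mono) auto
  show ?thesis unfolding is_packing_def
  proof (intro conjI ballI impI)
    fix x y assume "x \<in> X" "y \<in> X" "x \<noteq> y"
    then have "card {B\<in>F. x \<in> B \<and> y \<in> B} \<le> 1" using pk unfolding is_packing_def by blast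
    then show "card {B\<in>G. x \<in> B \<and> y \<in> B} \<le> 1" using le[of x y] by linarith
  qed (use pk assms(2) in \<open>auto simp: is_packing_def\<close>)
qed

lemma packing_intro:
  assumes finX: "finite X" and cX: "card X = v" and blk: "\<forall>B\<in>F. B \<subseteq> X \<and> card B = k"
    and lin: "\<forall>B\<in>F. \<forall>C\<in>F. B \<noteq> C \<longrightarrow> card (B \<inter> C) \<le> 1"
  shows "is_packing X v k F"
proof -
  have "F \<subseteq> Pow X" using blk by auto
  then have finF: "finite F" using finX by (meson finite_Pow_iff finite_subset)
  have pair: "card {B\<in>F. x \<in> B \<and> y \<in> B} \<le> 1" if xy: "x \<noteq> y" for x y
  proof -
    let ?S = "{B\<in>F. x \<in> B \<and> y \<in> B}"
    have eq: "B = C" if B: "B \<in> ?S" and C: "C \<in> ?S" for B C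
    proof (rule ccontr)
      assume ne: "B \<noteq> C"
      have BF: "B \<in> F" and CF: "C \<in> F" using B C by auto
      have le: "card (B \<inter> C) \<le> 1" using lin BF CF ne by blast
      have "B \<subseteq> X" using blk BF by blast
      then have "finite (B \<inter> C)" using finX by (meson finite_Int finite_subset)
      moreover have "{x, y} \<subseteq> B \<inter> C" using B C by auto
      ultimately have "card {x, y} \<le> card (B \<inter> C)" by (rule card_mono)
      then show False using le xy by simp
    qed
    have "finite ?S" using finF by simp
    then have "card ?S \<le> Suc 0" using eq by (subst card_le_Suc0_iff_eq) blast+
    then show ?thesis by simp
  qed
  show ?thesis unfolding is_packing_def
  proof (intro conjI)
    show "\<forall>x\<in>X. \<forall>y\<in>X. x \<noteq> y \<longrightarrow> card {B\<in>F. x \<in> B \<and> y \<in> B} \<le> 1"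
      using pair by blast
  qed (rule finX cX blk)+
qed

lemma ppc_fin:
  assumes "finite F" shows "finite {card P | P. is_ppc F P}"
proof (rule finite_subset)
  show "{card P | P. is_ppc F P} \<subseteq> card ` Pow F"
  proof
    fix s assume "s \<in> {card P | P. is_ppc F P}"
    then obtain P where P: "s = card P" "is_ppc F P" by blast
    then have "P \<in> Pow F" unfolding is_ppc_def by blast
    then show "s \<in> card ` Pow F" using P(1) by (rule rev_image_eqI)
  qed
  show "finite (card ` Pow F)" using assms by simp
qed

lemma ppc_one:
  assumes fin: "finite F" and ne: "F \<noteq> {}" and inter: "\<forall>B\<in>F. \<forall>C\<in>F. B \<noteq> C \<longrightarrow> B \<inter> C \<noteq> {}"
  shows "max_ppc_size F = 1"
proof -
  let ?S = "{card P | P. is_ppc F P}"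
  obtain B where B: "B \<in> F" using ne by auto
  have ppcB: "is_ppc F {B}" using B unfolding is_ppc_def by simp
  have one: "1 \<in> ?S" by (intro CollectI exI[of _ "{B}"]) (simp add: ppcB)
  have "s \<le> 1" if "s \<in> ?S" for s
  proof -
    obtain P where P: "is_ppc F P" "s = card P" using \<open>s \<in> ?S\<close> by blast
    have "P \<subseteq> F" using P(1) unfolding is_ppc_def by blast
    then have "finite P" using fin by (rule finite_subset)
    have "\<forall>a\<in>P. \<forall>b\<in>P. a = b"
    proof (intro ballI)
      fix a b assume ab: "a \<in> P" "b \<in> P"
      show "a = b"
      proof (rule ccontr)
        assume "a \<noteq> b"
        then have "a \<inter> b = {}" using P(1) ab unfolding is_ppc_def by blast
        moreover have "a \<inter> b \<noteq> {}" using inter \<open>a \<noteq> b\<close> ab \<open>P \<subseteq> F\<close> by blast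
        ultimately show False by simp
      qed
    qed
    then show "s \<le> 1" using card_le_Suc0_iff_eq[OF \<open>finite P\<close>] P by simp
  qed
  then show ?thesis unfolding max_ppc_size_def by (rule Max_eqI[OF ppc_fin[OF fin] _ one])
qed

lemma ppc_one_inter:
  assumes fin: "finite F" and m: "max_ppc_size F = 1" and BC: "B \<in> F" "C \<in> F" "B \<noteq> C"
  shows "B \<inter> C \<noteq> {}"
proof
  assume "B \<inter> C = {}"
  then have "is_ppc F {B, C}" using BC by (auto simp: is_ppc_def)
  then have "2 \<in> {card P | P. is_ppc F P}" using BC(3)
    by (intro CollectI exI[of _ "{B,C}"]) simp
  then have "2 \<le> max_ppc_size F" unfolding max_ppc_size_def by (rule Max_ge[OF ppc_fin[OF fin]])
  then show False using m by simp
qed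

lemma inter_bound:
  assumes pk: "is_packing X v 4 F" and inter: "\<forall>B\<in>F. \<forall>C\<in>F. B \<noteq> C \<longrightarrow> B \<inter> C \<noteq> {}"
  shows "card F \<le> 13 \<or> 3 * card F \<le> v - 1"
proof -
  have fin: "finite F" using packing_finite[OF pk] .
  have finX: "finite X" and cX: "card X = v" and blk: "\<And>B. B \<in> F \<Longrightarrow> B \<subseteq> X \<and> card B = 4"
    using pk unfolding is_packing_def by auto
  have finB: "\<And>B. B \<in> F \<Longrightarrow> finite B" using blk finX finite_subset by blast
  show ?thesis
  proof (cases "F = {}")
    case True then show ?thesis by simp
  next
    case ne: False
    then obtain B0 where B0: "B0 \<in> F" by auto
    show ?thesis
    proof (cases "\<exists>x. \<forall>B\<in>F. x \<in> B")
      case True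
      then obtain x where x: "\<forall>B\<in>F. x \<in> B" by auto
      have xX: "x \<in> X" using x B0 blk by auto
      have disj: "(B - {x}) \<inter> (C - {x}) = {}" if "B \<in> F" "C \<in> F" "B \<noteq> C" for B C
      proof -
        have "card (B \<inter> C) \<le> 1" using packing_linear[OF pk that] .
        moreover have "x \<in> B \<inter> C" using x that by auto
        moreover have "finite (B \<inter> C)" using finB that by auto
        ultimately have "\<forall>a\<in>B \<inter> C. a = x" using card_le_Suc0_iff_eq[of "B \<inter> C"] by auto
        then show ?thesis by blast
      qed
      have "card (\<Union>B\<in>F. B - {x}) = (\<Sum>B\<in>F. card (B - {x}))"
        using fin finB disj by (intro card_UN_disjoint) auto
      also have "\<dots> = (\<Sum>B\<in>F. 3)"
        using x blk finB by (intro sum.cong) (auto simp: card_Diff_singleton)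
      also have "\<dots> = 3 * card F" by simp
      finally have e: "card (\<Union>B\<in>F. B - {x}) = 3 * card F" .
      have "(\<Union>B\<in>F. B - {x}) \<subseteq> X - {x}" using blk by auto
      then have "card (\<Union>B\<in>F. B - {x}) \<le> card (X - {x})" using finX by (intro card_mono) auto
      also have "\<dots> = v - 1" using xX cX finX by (simp add: card_Diff_singleton)
      finally show ?thesis using e by simp
    next
      case False
      have deg: "card {C\<in>F. x \<in> C} \<le> 4" for x
      proof -
        from False obtain B where B: "B \<in> F" "x \<notin> B" by auto
        let ?Fx = "{C\<in>F. x \<in> C}"
        have "\<forall>C\<in>?Fx. \<exists>y. y \<in> C \<inter> B" using inter B by blast
        then obtain f where f: "\<forall>C\<in>?Fx. f C \<in> C \<inter> B" by metis
        have "inj_on f ?Fx"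
        proof (rule inj_onI)
          fix C C' assume C: "C \<in> ?Fx" "C' \<in> ?Fx" "f C = f C'"
          show "C = C'"
          proof (rule ccontr)
            assume "C \<noteq> C'"
            then have le: "card (C \<inter> C') \<le> 1" using packing_linear[OF pk] C by auto
            have "{x, f C} \<subseteq> C \<inter> C'" using C f by auto
            moreover have "finite (C \<inter> C')" using C finB by auto
            ultimately have "card {x, f C} \<le> card (C \<inter> C')" by (rule card_mono[rotated])
            moreover have "x \<noteq> f C" using f C B by auto
            ultimately show False using le by simp
          qed
        qed
        moreover have "f ` ?Fx \<subseteq> B" using f by auto
        ultimately have "card ?Fx \<le> card B" using finB[OF B(1)] by (rule card_inj_on_le)
        then show ?thesis using blk B by simp
      qed
      have "F - {B0} \<subseteq> (\<Union>y\<in>B0. {C\<in>F. y \<in> C} - {B0})" using inter B0 by blast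
      then have "card (F - {B0}) \<le> card (\<Union>y\<in>B0. {C\<in>F. y \<in> C} - {B0})"
        using fin by (intro card_mono) (auto intro: finite_subset[OF _ fin])
      also have "\<dots> \<le> (\<Sum>y\<in>B0. card ({C\<in>F. y \<in> C} - {B0}))"
        using finB[OF B0] by (rule card_UN_le)
      also have "\<dots> \<le> (\<Sum>y\<in>B0. 3)"
      proof (rule sum_mono)
        fix y assume "y \<in> B0"
        then have "card ({C\<in>F. y \<in> C} - {B0}) = card {C\<in>F. y \<in> C} - 1"
          using B0 fin by (intro card_Diff_singleton) auto
        then show "card ({C\<in>F. y \<in> C} - {B0}) \<le> 3" using deg[of y] by simp
      qed
      also have "\<dots> = 12" using blk[OF B0] by simp
      finally have le12: "card (F - {B0}) \<le> 12" .
      have "card F = Suc (card (F - {B0}))" by (rule card.remove[OF fin B0])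
      then show ?thesis using le12 by linarith
    qed
  qed
qed

lemma tangent: fixes d m :: nat shows "(2*m+1)*d \<le> d*d + m*(m+1)"
proof (cases "d \<le> m")
  case True
  then obtain k where "m = d + k" using le_Suc_ex by blast
  then show ?thesis by (simp add: algebra_simps)
next
  case False
  then obtain k where "d = m + 1 + k" by (metis add.commute add_Suc less_imp_Suc_add not_le plus_1_eq_Suc)
  then show ?thesis by (simp add: algebra_simps)
qed

lemma ifmult: "(if P then 1 else (0::nat)) * (if Q then 1 else 0) = (if P \<and> Q then 1 else 0)"
  by simp

lemma count_bound:
  assumes pk: "is_packing {..<v} v 4 F"
  shows "(2*m+1)*(4*card F) \<le> card F * (card F + 3) + v*(m*(m+1))"
proof -
  let ?X = "{..<v::nat}"
  define d where "d x = card {B\<in>F. x \<in> B}" for x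
  have fin: "finite F" using packing_finite[OF pk] .
  have blk: "\<And>B. B \<in> F \<Longrightarrow> B \<subseteq> ?X \<and> card B = 4" using pk unfolding is_packing_def by auto
  have d_sum: "d x = (\<Sum>B\<in>F. if x \<in> B then 1 else 0)" for x
    unfolding d_def by (subst sum.inter_filter[OF fin, symmetric]) simp
  have cardX: "(\<Sum>x\<in>?X. if x \<in> B then 1 else 0) = card B" if "B \<subseteq> ?X" for B
  proof -
    have "(\<Sum>x\<in>?X. if x \<in> B then 1 else (0::nat)) = card (?X \<inter> B)"
      by (simp add: sum.If_cases)
    also have "?X \<inter> B = B" using that by auto
    finally show ?thesis .
  qed
  have S1: "(\<Sum>x\<in>?X. d x) = 4 * card F"
  proof -
    have "(\<Sum>x\<in>?X. d x) = (\<Sum>x\<in>?X. \<Sum>B\<in>F. if x \<in> B then 1 else 0)" by (simp add: d_sum)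
    also have "\<dots> = (\<Sum>B\<in>F. \<Sum>x\<in>?X. if x \<in> B then 1 else 0)" by (rule sum.swap)
    also have "\<dots> = (\<Sum>B\<in>F. 4)" using blk cardX by (intro sum.cong) auto
    finally show ?thesis by simp
  qed
  have S2: "(\<Sum>x\<in>?X. d x * d x) \<le> card F * (card F + 3)"
  proof -
    have "(\<Sum>x\<in>?X. d x * d x) = (\<Sum>x\<in>?X. \<Sum>B\<in>F. \<Sum>C\<in>F. if x \<in> B \<inter> C then 1 else 0)"
      by (simp add: d_sum sum_product ifmult)
    also have "\<dots> = (\<Sum>B\<in>F. \<Sum>x\<in>?X. \<Sum>C\<in>F. if x \<in> B \<inter> C then 1 else 0)" by (rule sum.swap)
    also have "\<dots> = (\<Sum>B\<in>F. \<Sum>C\<in>F. \<Sum>x\<in>?X. if x \<in> B \<inter> C then 1 else 0)"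
      by (intro sum.cong refl sum.swap)
    also have "\<dots> = (\<Sum>B\<in>F. \<Sum>C\<in>F. card (B \<inter> C))"
      using blk by (intro sum.cong refl cardX) auto
    also have "\<dots> \<le> (\<Sum>B\<in>F. \<Sum>C\<in>F. if C = B then 4 else 1)"
    proof (intro sum_mono)
      fix B C assume "B \<in> F" "C \<in> F"
      then show "card (B \<inter> C) \<le> (if C = B then 4 else 1)"
        using packing_linear[OF pk] blk by auto
    qed
    also have "\<dots> = (\<Sum>B\<in>F. card F + 3)"
    proof (intro sum.cong refl)
      fix B assume B: "B \<in> F"
      have "(\<Sum>C\<in>F. if C = B then 4 else 1) = (\<Sum>C\<in>F. 1 + (if C = B then 3 else (0::nat)))"
        by (intro sum.cong) auto
      also have "\<dots> = (\<Sum>C\<in>F. 1) + (\<Sum>C\<in>F. if C = B then 3 else (0::nat))"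
        by (rule sum.distrib)
      also have "\<dots> = card F + 3" using B fin by (simp add: sum.delta')
      finally show "(\<Sum>C\<in>F. if C = B then 4 else 1) = card F + 3" .
    qed
    finally show ?thesis by simp
  qed
  have "(\<Sum>x\<in>?X. (2*m+1)*d x) \<le> (\<Sum>x\<in>?X. d x * d x + m*(m+1))"
    by (intro sum_mono tangent)
  moreover have "(\<Sum>x\<in>?X. (2*m+1)*d x) = (2*m+1) * (\<Sum>x\<in>?X. d x)"
    by (rule sum_distrib_left[symmetric])
  moreover have "(\<Sum>x\<in>?X. d x * d x + m*(m+1)) = (\<Sum>x\<in>?X. d x * d x) + v*(m*(m+1))"
    by (simp add: sum.distrib)
  ultimately have "(2*m+1) * (4 * card F) \<le> (\<Sum>x\<in>?X. d x * d x) + v*(m*(m+1))"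
    unfolding S1 by simp
  then show ?thesis by (rule order.trans[OF _ add_le_mono1[OF S2]])
qed

definition nv :: "nat \<Rightarrow> nat" where
  "nv v = (if v \<le> 6 then 1 else if v \<le> 8 then 2 else if v = 9 then 3 else if v = 10 then 5
     else if v = 11 then 6 else if v = 12 then 9 else 13)"

lemma small_bound:
  assumes v: "4 \<le> v" "v \<le> 13" and pk: "is_packing {..<v} v 4 F"
  shows "card F \<le> nv v"
proof (rule ccontr)
  assume "\<not> ?thesis"
  then obtain G where G: "G \<subseteq> F" "card G = Suc (nv v)"
    using obtain_subset_with_card_n[of "Suc (nv v)" F] by (metis not_less_eq_eq)
  have pkG: "is_packing {..<v} v 4 G" using packing_subset[OF pk G(1)] .
  have H: "(2*m+1)*(4*Suc (nv v)) \<le> Suc (nv v) * (Suc (nv v) + 3) + v*(m*(m+1))" for m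
    using count_bound[OF pkG, of m] unfolding G(2) .
  have "v = 4 \<or> v = 5 \<or> v = 6 \<or> v = 7 \<or> v = 8 \<or> v = 9 \<or> v = 10 \<or> v = 11 \<or> v = 12 \<or> v = 13"
    using v by presburger
  then show False
  proof (elim disjE)
  qed (use H[of 1] H[of 2] H[of 3] H[of 4] in \<open>simp add: nv_def\<close>)+
qed

lemma construct:
  assumes n: "0 < length xs" and sub: "\<forall>B\<in>set xs. B \<subseteq> {..<v} \<and> card B = 4"
    and inter: "\<forall>i<length xs. \<forall>j<length xs. i \<noteq> j \<longrightarrow> card (xs!i \<inter> xs!j) = 1"
  shows "is_packing {..<v} v 4 (set xs) \<and> card (set xs) = length xs \<and> max_ppc_size (set xs) = 1"
proof -
  have dist: "distinct xs"
    unfolding distinct_conv_nth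
  proof (intro allI impI)
    fix i j assume ij: "i < length xs" "j < length xs" "i \<noteq> j"
    show "xs ! i \<noteq> xs ! j"
    proof
      assume "xs ! i = xs ! j"
      then have "card (xs!i \<inter> xs!j) = 4" using sub ij by auto
      then show False using inter ij by auto
    qed
  qed
  have pw: "card (B \<inter> C) = 1" if B: "B \<in> set xs" and C: "C \<in> set xs" and BC: "B \<noteq> C" for B C
  proof -
    obtain i where i: "i < length xs" "B = xs ! i" using B by (metis in_set_conv_nth)
    obtain j where j: "j < length xs" "C = xs ! j" using C by (metis in_set_conv_nth)
    have "i \<noteq> j" using i j BC by blast
    then show ?thesis using inter i j by blast
  qed
  have pk: "is_packing {..<v} v 4 (set xs)"
  proof (rule packing_intro)
    show "\<forall>B\<in>set xs. \<forall>C\<in>set xs. B \<noteq> C \<longrightarrow> card (B \<inter> C) \<le> 1"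
      using pw by simp
  qed (use sub in simp_all)
  have "max_ppc_size (set xs) = 1"
  proof (rule ppc_one)
    show "set xs \<noteq> {}" using n by simp
    show "\<forall>B\<in>set xs. \<forall>C\<in>set xs. B \<noteq> C \<longrightarrow> B \<inter> C \<noteq> {}"
    proof (intro ballI impI notI)
      fix B C assume "B \<in> set xs" "C \<in> set xs" "B \<noteq> C" "B \<inter> C = {}"
      then show False using pw[of B C] by simp
    qed
  qed simp
  then show ?thesis using pk dist by (simp add: distinct_card)
qed


definition good :: "nat set list \<Rightarrow> nat \<Rightarrow> bool" where
  "good xs w \<longleftrightarrow> 0 < length xs \<and> (\<forall>B\<in>set xs. B \<subseteq> {..<w} \<and> card B = 4) \<and>
     (\<forall>i<length xs. \<forall>j<length xs. i \<noteq> j \<longrightarrow> card (xs!i \<inter> xs!j) = 1)"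

definition Sb :: "nat \<Rightarrow> nat set" where
  "Sb v = {card \<B> | \<B>. is_packing {..<v} v 4 \<B> \<and> max_ppc_size \<B> = 1}"

definition Sd :: "nat \<Rightarrow> nat set" where
  "Sd v = {card \<B> | \<B>. is_packing {..<v} v 4 \<B>}"

lemma good_in:
  assumes "good xs w" "w \<le> v"
  shows "length xs \<in> Sb v \<and> length xs \<in> Sd v"
proof -
  have g: "0 < length xs" "\<forall>B\<in>set xs. B \<subseteq> {..<w} \<and> card B = 4"
     "\<forall>i<length xs. \<forall>j<length xs. i \<noteq> j \<longrightarrow> card (xs!i \<inter> xs!j) = 1"
    using assms(1)[unfolded good_def] by simp_all
  have wv: "{..<w} \<subseteq> {..<v}" using assms(2) by simp
  have "\<forall>B\<in>set xs. B \<subseteq> {..<v} \<and> card B = 4"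
  proof
    fix B assume "B \<in> set xs"
    then have "B \<subseteq> {..<w}" "card B = 4" using g(2) by simp_all
    then show "B \<subseteq> {..<v} \<and> card B = 4" using wv by (meson subset_trans)
  qed
  note g = g(1) this g(3)
  from g
  have c: "is_packing {..<v} v 4 (set xs) \<and> card (set xs) = length xs \<and> max_ppc_size (set xs) = 1"
    by (rule construct)
  have "length xs \<in> Sb v" unfolding Sb_def
    by (rule CollectI, rule exI[of _ "set xs"]) (use c in simp)
  moreover have "length xs \<in> Sd v" unfolding Sd_def
    by (rule CollectI, rule exI[of _ "set xs"]) (use c in simp)
  ultimately show ?thesis ..
qed

definition PG :: "nat set list" where "PG = [{0,1,3,9},{1,2,4,10},{2,3,5,11},{3,4,6,12},{4,5,7,0},{5,6,8,1},{6,7,9,2},{7,8,10,3},{8,9,11,4},{9,10,12,5},{10,11,0,6},{11,12,1,7},{12,0,2,8}]"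
definition P12 :: "nat set list" where "P12 = [{0,1,3,9},{1,2,4,10},{2,3,5,11},{4,5,7,0},{5,6,8,1},{6,7,9,2},{7,8,10,3},{8,9,11,4},{10,11,0,6}]"
definition P11 :: "nat set list" where "P11 = [{0,1,3,9},{1,2,4,10},{4,5,7,0},{5,6,8,1},{6,7,9,2},{7,8,10,3}]"
definition K5 :: "nat set list" where "K5 = [{0,1,2,3},{0,4,5,6},{1,4,7,8},{2,5,7,9},{3,6,8,9}]"
definition T3 :: "nat set list" where "T3 = [{0,1,2,3},{0,4,5,6},{1,4,7,8}]"
definition T2 :: "nat set list" where "T2 = [{0,1,2,3},{0,4,5,6}]"
definition T1 :: "nat set list" where "T1 = [{0,1,2,3}]"

lemma good_PG: "good PG 13" unfolding good_def PG_def by (simp add: less_Suc_eq numeral_eq_Suc)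
lemma good_P12: "good P12 12" unfolding good_def P12_def by (simp add: less_Suc_eq numeral_eq_Suc)
lemma good_P11: "good P11 11" unfolding good_def P11_def by (simp add: less_Suc_eq numeral_eq_Suc)
lemma good_K5: "good K5 10" unfolding good_def K5_def by (simp add: less_Suc_eq numeral_eq_Suc)
lemma good_T3: "good T3 9" unfolding good_def T3_def by (simp add: less_Suc_eq numeral_eq_Suc)
lemma good_T2: "good T2 7" unfolding good_def T2_def by (simp add: less_Suc_eq numeral_eq_Suc)
lemma good_T1: "good T1 4" unfolding good_def T1_def by (simp add: less_Suc_eq numeral_eq_Suc)

lemma len_fams: "length PG = 13" "length P12 = 9" "length P11 = 6" "length K5 = 5"
  "length T3 = 3" "length T2 = 2" "length T1 = 1"
  by (simp_all add: PG_def P12_def P11_def K5_def T3_def T2_def T1_def)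

lemma small_in:
  assumes "4 \<le> v" "v \<le> 13"
  shows "nv v \<in> Sb v \<and> nv v \<in> Sd v"
proof -
  have c: "v \<le> 6 \<or> v = 7 \<or> v = 8 \<or> v = 9 \<or> v = 10 \<or> v = 11 \<or> v = 12 \<or> v = 13"
    using assms by presburger
  have 1: "length T1 \<in> Sb v \<and> length T1 \<in> Sd v" using good_in[OF good_T1] assms(1) .
  show ?thesis
  proof (cases "v \<le> 6")
    case True then show ?thesis using 1 len_fams by (simp add: nv_def)
  next
    case F6: False
    show ?thesis
    proof (cases "v \<le> 8")
      case True
      have "length T2 \<in> Sb v \<and> length T2 \<in> Sd v" using good_in[OF good_T2] F6 by simp
      then show ?thesis using True F6 len_fams by (simp add: nv_def)
    next
      case F8: False
      show ?thesis
      proof (cases "v = 9")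
        case True
        have "length T3 \<in> Sb v \<and> length T3 \<in> Sd v" using good_in[OF good_T3] True by simp
        then show ?thesis using True len_fams by (simp add: nv_def)
      next
        case F9: False
        show ?thesis
        proof (cases "v = 10")
          case True
          have "length K5 \<in> Sb v \<and> length K5 \<in> Sd v" using good_in[OF good_K5] True by simp
          then show ?thesis using True len_fams by (simp add: nv_def)
        next
          case F10: False
          show ?thesis
          proof (cases "v = 11")
            case True
            have "length P11 \<in> Sb v \<and> length P11 \<in> Sd v" using good_in[OF good_P11] True by simp
            then show ?thesis using True len_fams by (simp add: nv_def)
          next
            case F11: False
            show ?thesis
            proof (cases "v = 12")
              case True
              have "length P12 \<in> Sb v \<and> length P12 \<in> Sd v" using good_in[OF good_P12] True by simp
              then show ?thesis using True len_fams by (simp add: nv_def)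
            next
              case F12: False
              then have "v = 13" using c F6 F8 F9 F10 F11 by simp
              have "length PG \<in> Sb v \<and> length PG \<in> Sd v" using good_in[OF good_PG] \<open>v = 13\<close> by simp
              then show ?thesis using \<open>v = 13\<close> len_fams by (simp add: nv_def)
            qed
          qed
        qed
      qed
    qed
  qed
qed

lemma star_good:
  assumes "0 < n" "3 * n < v"
  shows "n \<in> Sb v"
proof -
  define xs where "xs = map (\<lambda>i. {0, 3*i+1, 3*i+2, 3*i+3::nat}) [0..<n]"
  have len: "length xs = n" unfolding xs_def by simp
  have "good xs v" unfolding good_def
  proof (intro conjI)
    show "0 < length xs" using len assms by simp
    show "\<forall>B\<in>set xs. B \<subseteq> {..<v} \<and> card B = 4"
      using assms(2) unfolding xs_def by auto
    show "\<forall>i<length xs. \<forall>j<length xs. i \<noteq> j \<longrightarrow> card (xs!i \<inter> xs!j) = 1"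
    proof (intro allI impI)
      fix i j assume ij: "i < length xs" "j < length xs" "i \<noteq> j"
      have "xs!i \<inter> xs!j = {0}" using ij len unfolding xs_def by auto
      then show "card (xs!i \<inter> xs!j) = 1" by simp
    qed
  qed
  then show ?thesis using good_in[of xs v v] len by simp
qed

lemma Max_eq_nat:
  assumes "\<forall>s\<in>A. s \<le> (N::nat)" "N \<in> A"
  shows "Max A = N"
proof (rule Max_eqI)
  have "A \<subseteq> {..N}" using assms(1) by auto
  then show "finite A" by (rule finite_subset) simp
  show "y \<le> N" if "y \<in> A" for y using assms(1) that by blast
  show "N \<in> A" by (rule assms(2))
qed

theorem theorem4p1:
  fixes v :: nat
  assumes "v \<ge> 4"
  shows "beta 1 v 4 = (if v \<le> 13 then D v 4 else if v \<le> 39 then 13 else (v - 1) div 3)"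
proof -
  have bS: "beta 1 v 4 = Max (Sb v)" unfolding beta_def Sb_def ..
  have dS: "D v 4 = Max (Sd v)" unfolding D_def Sd_def ..
  have inter: "B \<inter> C \<noteq> {}" if "is_packing {..<v} v 4 F" "max_ppc_size F = 1" "B \<in> F" "C \<in> F" "B \<noteq> C" for F B C
    using ppc_one_inter[OF packing_finite[OF that(1)] that(2-5)] .
  have ib: "card F \<le> 13 \<or> 3 * card F \<le> v - 1" if "is_packing {..<v} v 4 F" "max_ppc_size F = 1" for F
    using inter_bound[OF that(1)] inter[OF that] by blast
  show ?thesis
  proof (cases "v \<le> 13")
    case True
    have "\<forall>s\<in>Sb v. s \<le> nv v" unfolding Sb_def using small_bound[OF assms True] by blast
    then have "Max (Sb v) = nv v" using small_in[OF assms True] by (intro Max_eq_nat) auto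
    moreover have "\<forall>s\<in>Sd v. s \<le> nv v" unfolding Sd_def using small_bound[OF assms True] by blast
    then have "Max (Sd v) = nv v" using small_in[OF assms True] by (intro Max_eq_nat) auto
    ultimately show ?thesis using True bS dS by simp
  next
    case F13: False
    show ?thesis
    proof (cases "v \<le> 39")
      case True
      have "\<forall>s\<in>Sb v. s \<le> 13"
      proof
        fix s assume "s \<in> Sb v"
        then obtain F where "is_packing {..<v} v 4 F" "max_ppc_size F = 1" "s = card F"
          unfolding Sb_def by blast
        then have "s \<le> 13 \<or> 3 * s \<le> v - 1" using ib by blast
        then show "s \<le> 13" using True by presburger
      qed
      moreover have "13 \<in> Sb v" using good_in[OF good_PG] len_fams F13 by simp
      ultimately show ?thesis using bS F13 True by (simp add: Max_eq_nat)
    next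
      case False
      have "\<forall>s\<in>Sb v. s \<le> (v - 1) div 3"
      proof
        fix s assume "s \<in> Sb v"
        then obtain F where "is_packing {..<v} v 4 F" "max_ppc_size F = 1" "s = card F"
          unfolding Sb_def by blast
        then have "s \<le> 13 \<or> 3 * s \<le> v - 1" using ib by blast
        then show "s \<le> (v - 1) div 3" using False by presburger
      qed
      moreover have "(v - 1) div 3 \<in> Sb v" using False by (intro star_good) (presburger, presburger)
      ultimately show ?thesis using bS F13 False by (simp add: Max_eq_nat)
    qed
  qed
qed

end
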